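(* Let $U,V\in\mathbb{R}^n$ be random vectors whose coordinate pairs $(U_i,V_i)\in\mathbb{R}^2$, $i=1,\ldots,n$, are i.i.d. with $\mathbb{E}(U_i^4)<\infty$ and $\mathbb{E}(V_i^4)<\infty$, and let $\Pi$ be a random matrix independent of $(U,V)$. Let $m=m_n\to\infty$ with $m/n\to0$ as $n\to\infty$. (i) If $\Pi$ is a random sampling with replacement matrix with sampling probabilities $p_1,\ldots,p_n$ satisfying $\sum_{i=1}^n p_i^2=o(m^{-1})$, then as $n\to\infty$, $\mathrm{MSE}\left[\sqrt{m}\,(U^T\Pi^T\Pi V-U^TV)/n\right]\to\mathrm{Var}(U_iV_i)$. (ii) If $\Pi$ is a Bernoulli sampling matrix, then as $n\to\infty$, $\mathrm{MSE}\left[\sqrt{m}\,(U^T\Pi^T\Pi V-U^TV)/n\right]\to\mathbb{E}(U_i^2V_i^2)$.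
   Context: For a random variable $G$, $\mathrm{MSE}(G):=[\mathbb{E}(G)]^2+\mathrm{Var}(G)$. Random sampling with replacement (RS): for deterministic probabilities $p_1,\dots,p_n\ge0$ with $\sum_i p_i=1$, draw $k_1,\ldots,k_m$ independently from $\{1,\ldots,n\}$ with $\Pr(k_t=i)=p_i$, and set $\Pi=\sqrt{n/m}\,(\iota_{k_1},\ldots,\iota_{k_m})^T\in\mathbb{R}^{m\times n}$, where $\iota_k$ is the $k$-th column of the $n\times n$ identity matrix. Bernoulli sampling (BS): $\Pi=\sqrt{n/m}\,B$ where $B$ is an $n\times n$ diagonal matrix with i.i.d. Bernoulli$(m/n)$ diagonal entries. *)

theory Defs
  imports "HOL-Probability.Probability"
begin

definition MSE :: "'a measure \<Rightarrow> ('a \<Rightarrow> real) \<Rightarrow> real" where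
  "MSE M G = (\<integral>x. G x \<partial>M)^2 + (\<integral>x. (G x - (\<integral>y. G y \<partial>M))^2 \<partial>M)"

definition RS_matrix :: "nat \<Rightarrow> nat \<Rightarrow> (nat \<Rightarrow> nat) \<Rightarrow> nat \<Rightarrow> nat \<Rightarrow> real" where
  "RS_matrix n m k = (\<lambda>a i. sqrt (real n / real m) * (if k a = i then 1 else 0))"

definition BS_matrix :: "nat \<Rightarrow> nat \<Rightarrow> (nat \<Rightarrow> bool) \<Rightarrow> nat \<Rightarrow> nat \<Rightarrow> real" where
  "BS_matrix n m B = (\<lambda>a i. sqrt (real n / real m) * (if a = i \<and> B i then 1 else 0))"

text \<open>For an r x c matrix P and vectors u, v of length c: u^T P^T P v = (P u)^T (P v).\<close>
definition quadPi :: "nat \<Rightarrow> nat \<Rightarrow> (nat \<Rightarrow> nat \<Rightarrow> real) \<Rightarrow> (nat \<Rightarrow> real) \<Rightarrow> (nat \<Rightarrow> real) \<Rightarrow> real" where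
  "quadPi r c P u v = (\<Sum>a<r. (\<Sum>i<c. P a i * u i) * (\<Sum>j<c. P a j * v j))"

definition sketch_err :: "nat \<Rightarrow> nat \<Rightarrow> nat \<Rightarrow> (nat \<Rightarrow> nat \<Rightarrow> real) \<Rightarrow> (nat \<Rightarrow> real) \<Rightarrow> (nat \<Rightarrow> real) \<Rightarrow> real" where
  "sketch_err n m r P u v = sqrt (real m) * (quadPi r n P u v - (\<Sum>i<n. u i * v i)) / real n"

definition iid_pairs :: "'w measure \<Rightarrow> nat \<Rightarrow> (nat \<Rightarrow> 'w \<Rightarrow> real \<times> real) \<Rightarrow> (real \<times> real) measure \<Rightarrow> bool" where
  "iid_pairs M n X \<mu> \<longleftrightarrow>
     prob_space.indep_vars M (\<lambda>_. borel) X {..<n} \<and> (\<forall>i<n. distr M borel (X i) = \<mu>)"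

definition RS_sampling :: "'w measure \<Rightarrow> nat \<Rightarrow> nat \<Rightarrow> (nat \<Rightarrow> real) \<Rightarrow> (nat \<Rightarrow> 'w \<Rightarrow> nat)
     \<Rightarrow> (nat \<Rightarrow> 'w \<Rightarrow> real \<times> real) \<Rightarrow> bool" where
  "RS_sampling M n m p k X \<longleftrightarrow>
     prob_space.indep_vars M (\<lambda>_. count_space UNIV) k {..<m} \<and>
     (\<forall>t<m. \<forall>i<n. measure M {w \<in> space M. k t w = i} = p i) \<and>
     (\<lambda>w. restrict (\<lambda>i. X i w) {..<n}) \<in> M \<rightarrow>\<^sub>M PiM {..<n} (\<lambda>_. borel) \<and>
     (\<lambda>w. restrict (\<lambda>t. k t w) {..<m}) \<in> M \<rightarrow>\<^sub>M PiM {..<m} (\<lambda>_. count_space UNIV) \<and>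
     prob_space.indep_set M
       (sets (vimage_algebra (space M) (\<lambda>w. restrict (\<lambda>i. X i w) {..<n}) (PiM {..<n} (\<lambda>_. borel))))
       (sets (vimage_algebra (space M) (\<lambda>w. restrict (\<lambda>t. k t w) {..<m}) (PiM {..<m} (\<lambda>_. count_space UNIV))))"

definition BS_sampling :: "'w measure \<Rightarrow> nat \<Rightarrow> nat \<Rightarrow> (nat \<Rightarrow> 'w \<Rightarrow> bool)
     \<Rightarrow> (nat \<Rightarrow> 'w \<Rightarrow> real \<times> real) \<Rightarrow> bool" where
  "BS_sampling M n m B X \<longleftrightarrow>
     prob_space.indep_vars M (\<lambda>_. count_space UNIV) B {..<n} \<and>
     (\<forall>i<n. measure M {w \<in> space M. B i w} = real m / real n) \<and>
     (\<lambda>w. restrict (\<lambda>i. X i w) {..<n}) \<in> M \<rightarrow>\<^sub>M PiM {..<n} (\<lambda>_. borel) \<and>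
     (\<lambda>w. restrict (\<lambda>i. B i w) {..<n}) \<in> M \<rightarrow>\<^sub>M PiM {..<n} (\<lambda>_. count_space UNIV) \<and>
     prob_space.indep_set M
       (sets (vimage_algebra (space M) (\<lambda>w. restrict (\<lambda>i. X i w) {..<n}) (PiM {..<n} (\<lambda>_. borel))))
       (sets (vimage_algebra (space M) (\<lambda>w. restrict (\<lambda>i. B i w) {..<n}) (PiM {..<n} (\<lambda>_. count_space UNIV))))"

end

theory Submission
  imports Defs
begin



definition gen_sig :: "'a measure \<Rightarrow> ('a \<Rightarrow> 'x) \<Rightarrow> 'x measure \<Rightarrow> 'a set set" where
  "gen_sig M Y N = sigma_sets (space M) {Y -` A \<inter> space M | A. A \<in> sets N}"

lemma (in prob_space) indep_set_compose:
  fixes f :: "'x \<Rightarrow> real" and g :: "'y \<Rightarrow> real" and N1 :: "'x measure" and N2 :: "'y measure"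
  assumes ind: "indep_set (gen_sig M Y1 N1) (gen_sig M Y2 N2)"
    and Y1: "Y1 \<in> measurable M N1" and Y2: "Y2 \<in> measurable M N2"
    and f: "f \<in> borel_measurable N1" and g: "g \<in> borel_measurable N2"
  shows "indep_var borel (\<lambda>w. f (Y1 w)) borel (\<lambda>w. g (Y2 w))"
proof -
  have sub: "gen_sig M (\<lambda>w. h (Y w)) borel \<subseteq> gen_sig M Y N"
    if Y: "Y \<in> measurable M N" and h: "h \<in> borel_measurable N" for Y :: "'a \<Rightarrow> 'z" and N and h :: "'z \<Rightarrow> real"
    unfolding gen_sig_def
  proof (rule sigma_sets_mono')
    show "{(\<lambda>w. h (Y w)) -` A \<inter> space M |A. A \<in> sets borel} \<subseteq> {Y -` A \<inter> space M |A. A \<in> sets N}"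
    proof safe
      fix A :: "real set" assume A: "A \<in> sets borel"
      have "(\<lambda>w. h (Y w)) -` A \<inter> space M = Y -` (h -` A \<inter> space N) \<inter> space M"
        using measurable_space[OF Y] by auto
      moreover have "h -` A \<inter> space N \<in> sets N" using h A by (rule measurable_sets)
      ultimately show "\<exists>B. (\<lambda>w. h (Y w)) -` A \<inter> space M = Y -` B \<inter> space M \<and> B \<in> sets N" by blast
    qed
  qed
  have "indep_set (gen_sig M (\<lambda>w. f (Y1 w)) borel) (gen_sig M (\<lambda>w. g (Y2 w)) borel)"
    using ind sub[OF Y1 f] sub[OF Y2 g] unfolding indep_sets2_eq by blast
  then show ?thesis
    unfolding indep_var_eq gen_sig_def using Y1 Y2 f g by auto
qed

lemma (in prob_space) indep_prod:
  fixes f :: "'x \<Rightarrow> real" and g :: "'y \<Rightarrow> real" and N1 :: "'x measure" and N2 :: "'y measure"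
  assumes ind: "indep_set (gen_sig M Y1 N1) (gen_sig M Y2 N2)"
    and Y1: "Y1 \<in> measurable M N1" and Y2: "Y2 \<in> measurable M N2"
    and f: "f \<in> borel_measurable N1" and g: "g \<in> borel_measurable N2"
    and "integrable M (\<lambda>w. f (Y1 w))" "integrable M (\<lambda>w. g (Y2 w))"
  shows "(\<integral>w. f (Y1 w) * g (Y2 w) \<partial>M) = (\<integral>w. f (Y1 w) \<partial>M) * (\<integral>w. g (Y2 w) \<partial>M)"
    and "integrable M (\<lambda>w. f (Y1 w) * g (Y2 w))"
  using indep_var_lebesgue_integral[OF indep_set_compose[OF ind Y1 Y2 f g] assms(6,7)]
    indep_var_integrable[OF indep_set_compose[OF ind Y1 Y2 f g] assms(6,7)]
  by auto

lemma (in prob_space) core: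
  fixes Wf :: "nat \<Rightarrow> 'x \<Rightarrow> real" and Zf :: "nat \<Rightarrow> 'y \<Rightarrow> real" and N1 :: "'x measure" and N2 :: "'y measure"
  assumes ind: "indep_set (gen_sig M Y1 N1) (gen_sig M Y2 N2)"
    and Y1: "Y1 \<in> measurable M N1" and Y2: "Y2 \<in> measurable M N2"
    and Wm: "\<And>i. i<n \<Longrightarrow> Wf i \<in> borel_measurable N1"
    and Zm: "\<And>i. i<n \<Longrightarrow> Zf i \<in> borel_measurable N2"
    and Wi: "\<And>i j. i<n \<Longrightarrow> j<n \<Longrightarrow> integrable M (\<lambda>w. Wf i (Y1 w) * Wf j (Y1 w))"
    and Wi1: "\<And>i. i<n \<Longrightarrow> integrable M (\<lambda>w. Wf i (Y1 w))"
    and Zi: "\<And>i j. i<n \<Longrightarrow> j<n \<Longrightarrow> integrable M (\<lambda>w. Zf i (Y2 w) * Zf j (Y2 w))"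
    and Zi1: "\<And>i. i<n \<Longrightarrow> integrable M (\<lambda>w. Zf i (Y2 w))"
  shows "(\<integral>w. (\<Sum>i<n. Zf i (Y2 w) * Wf i (Y1 w)) \<partial>M)
          = (\<Sum>i<n. (\<integral>w. Zf i (Y2 w) \<partial>M) * (\<integral>w. Wf i (Y1 w) \<partial>M))"
    and "(\<integral>w. (\<Sum>i<n. Zf i (Y2 w) * Wf i (Y1 w))^2 \<partial>M)
          = (\<Sum>i<n. \<Sum>j<n. (\<integral>w. Zf i (Y2 w) * Zf j (Y2 w) \<partial>M) * (\<integral>w. Wf i (Y1 w) * Wf j (Y1 w) \<partial>M))"
proof -
  have P1: "(\<integral>w. Zf i (Y2 w) * Wf i (Y1 w) \<partial>M) = (\<integral>w. Zf i (Y2 w) \<partial>M) * (\<integral>w. Wf i (Y1 w) \<partial>M)"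
     and I1: "integrable M (\<lambda>w. Zf i (Y2 w) * Wf i (Y1 w))" if "i<n" for i
    using indep_prod[OF ind Y1 Y2 Wm[OF that] Zm[OF that] Wi1[OF that] Zi1[OF that]]
    by (auto simp: mult.commute)
  show "(\<integral>w. (\<Sum>i<n. Zf i (Y2 w) * Wf i (Y1 w)) \<partial>M)
          = (\<Sum>i<n. (\<integral>w. Zf i (Y2 w) \<partial>M) * (\<integral>w. Wf i (Y1 w) \<partial>M))"
    using I1 P1 by (simp add: Bochner_Integration.integral_sum)
  have mW: "(\<lambda>x. Wf i x * Wf j x) \<in> borel_measurable N1" if "i<n" "j<n" for i j
    using Wm that by measurable
  have mZ: "(\<lambda>x. Zf i x * Zf j x) \<in> borel_measurable N2" if "i<n" "j<n" for i j
    using Zm that by measurable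
  have P2: "(\<integral>w. (Zf i (Y2 w) * Zf j (Y2 w)) * (Wf i (Y1 w) * Wf j (Y1 w)) \<partial>M) =
     (\<integral>w. Zf i (Y2 w) * Zf j (Y2 w) \<partial>M) * (\<integral>w. Wf i (Y1 w) * Wf j (Y1 w) \<partial>M)"
     and I2: "integrable M (\<lambda>w. (Zf i (Y2 w) * Zf j (Y2 w)) * (Wf i (Y1 w) * Wf j (Y1 w)))"
     if "i<n" "j<n" for i j
    using indep_prod[OF ind Y1 Y2 mW[OF that] mZ[OF that] Wi[OF that] Zi[OF that]]
    by (auto simp: mult.commute)
  have sq: "(\<Sum>i<n. Zf i (Y2 w) * Wf i (Y1 w))^2 =
      (\<Sum>i<n. \<Sum>j<n. (Zf i (Y2 w) * Zf j (Y2 w)) * (Wf i (Y1 w) * Wf j (Y1 w)))" for w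
    by (simp add: power2_eq_square sum_product mult_ac)
  show "(\<integral>w. (\<Sum>i<n. Zf i (Y2 w) * Wf i (Y1 w))^2 \<partial>M)
          = (\<Sum>i<n. \<Sum>j<n. (\<integral>w. Zf i (Y2 w) * Zf j (Y2 w) \<partial>M) * (\<integral>w. Wf i (Y1 w) * Wf j (Y1 w) \<partial>M))"
  proof -
    have "(\<integral>w. (\<Sum>i<n. \<Sum>j<n. (Zf i (Y2 w) * Zf j (Y2 w)) * (Wf i (Y1 w) * Wf j (Y1 w))) \<partial>M)
      = (\<Sum>i<n. (\<integral>w. (\<Sum>j<n. (Zf i (Y2 w) * Zf j (Y2 w)) * (Wf i (Y1 w) * Wf j (Y1 w))) \<partial>M))"
      by (rule Bochner_Integration.integral_sum[where f="\<lambda>i w. \<Sum>j<n. (Zf i (Y2 w) * Zf j (Y2 w)) * (Wf i (Y1 w) * Wf j (Y1 w))"]) (auto intro!: integrable_sum I2)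
    also have "\<dots> = (\<Sum>i<n. \<Sum>j<n. (\<integral>w. (Zf i (Y2 w) * Zf j (Y2 w)) * (Wf i (Y1 w) * Wf j (Y1 w)) \<partial>M))"
      by (intro sum.cong refl, rule Bochner_Integration.integral_sum[where f="\<lambda>j w. (Zf _ (Y2 w) * Zf j (Y2 w)) * (Wf _ (Y1 w) * Wf j (Y1 w))"]) (auto intro!: I2)
    finally show ?thesis using P2 by (simp add: sq)
  qed
qed




lemma fst_snd_borel[measurable]:
  "(fst :: real \<times> real \<Rightarrow> real) \<in> borel_measurable borel"
  "(snd :: real \<times> real \<Rightarrow> real) \<in> borel_measurable borel"
  using measurable_fst[of "borel::real measure" "borel::real measure"]
    measurable_snd[of "borel::real measure" "borel::real measure"]
  by (simp_all add: borel_prod)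

lemma mu_int:
  fixes \<mu> :: "(real \<times> real) measure"
  assumes mu: "prob_space \<mu>" and smu: "sets \<mu> = sets borel"
    and U4: "integrable \<mu> (\<lambda>z. (fst z)^4)" and V4: "integrable \<mu> (\<lambda>z. (snd z)^4)"
  shows "integrable \<mu> (\<lambda>z. fst z * snd z)" "integrable \<mu> (\<lambda>z. (fst z * snd z)^2)"
proof -
  have S: "integrable \<mu> (\<lambda>z. 1 + ((fst z)^4 + (snd z)^4))"
  proof -
    have c: "integrable \<mu> (\<lambda>z. 1::real)"
      by (rule finite_measure.integrable_const[OF prob_space.finite_measure[OF mu]])
    show ?thesis by (intro Bochner_Integration.integrable_add c U4 V4)
  qed
  have b2': "(x*y)^2 \<le> x^4 + y^4" for x y :: real
  proof -
    have "0 \<le> (x^2 - y^2)^2" by simp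
    moreover have "(x^2 - y^2)^2 = x^4 + y^4 - 2*(x*y)^2" by (simp add: power2_eq_square algebra_simps power4_eq_xxxx)
    moreover have "0 \<le> (x*y)^2" by simp
    ultimately show ?thesis by linarith
  qed
  have b2: "\<bar>(x*y)^2\<bar> \<le> \<bar>1 + (x^4 + y^4)\<bar>" for x y :: real
    using b2'[of x y] by (simp del: power_mult_distrib)
  have b1: "\<bar>x*y\<bar> \<le> \<bar>1 + (x^4 + y^4)\<bar>" for x y :: real
  proof -
    have "\<bar>t\<bar> \<le> 1 + t^2" for t :: real
    proof -
      have "0 \<le> (\<bar>t\<bar> - 1/2)^2" by simp
      then show ?thesis by (simp add: power2_eq_square algebra_simps abs_mult_self_eq) 
    qed
    then have "\<bar>x*y\<bar> \<le> 1 + (x*y)^2" .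
    then show ?thesis using b2'[of x y] by (simp del: power_mult_distrib)
  qed
  show "integrable \<mu> (\<lambda>z. fst z * snd z)"
    apply (rule Bochner_Integration.integrable_bound[OF S])
    using b1 by (auto simp: measurable_cong_sets[OF smu refl])
  show "integrable \<mu> (\<lambda>z. (fst z * snd z)^2)"
    apply (rule Bochner_Integration.integrable_bound[OF S])
    using b2 by (auto simp del: power_mult_distrib simp: measurable_cong_sets[OF smu refl])
qed

lemma (in prob_space) W_moments:
  fixes X :: "nat \<Rightarrow> 'a \<Rightarrow> real \<times> real" and \<mu> :: "(real \<times> real) measure"
  assumes mu: "prob_space \<mu>" and iid: "iid_pairs M n X \<mu>"
    and U4: "integrable \<mu> (\<lambda>z. (fst z)^4)" and V4: "integrable \<mu> (\<lambda>z. (snd z)^4)"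
  shows "i<n \<Longrightarrow> integrable M (\<lambda>w. fst (X i w) * snd (X i w))"
   and "i<n \<Longrightarrow> (\<integral>w. fst (X i w) * snd (X i w) \<partial>M) = (\<integral>z. fst z * snd z \<partial>\<mu>)"
   and "i<n \<Longrightarrow> j<n \<Longrightarrow> integrable M (\<lambda>w. (fst (X i w) * snd (X i w)) * (fst (X j w) * snd (X j w)))"
   and "i<n \<Longrightarrow> j<n \<Longrightarrow> (\<integral>w. (fst (X i w) * snd (X i w)) * (fst (X j w) * snd (X j w)) \<partial>M)
          = (if i = j then (\<integral>z. (fst z * snd z)^2 \<partial>\<mu>) else (\<integral>z. fst z * snd z \<partial>\<mu>)^2)"
proof -
  have ind: "indep_vars (\<lambda>_. borel) X {..<n}" and dis: "\<And>i. i<n \<Longrightarrow> distr M borel (X i) = \<mu>"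
    using iid unfolding iid_pairs_def by auto
  have rv[measurable]: "X i \<in> measurable M borel" if "i<n" for i
    using ind that unfolding indep_vars_def2 by auto
  have smu: "sets \<mu> = sets borel" if "i<n" for i
    using dis[OF that] by (metis sets_distr)
  define h :: "real \<times> real \<Rightarrow> real" where "h z = fst z * snd z" for z
  have hm[measurable]: "h \<in> borel_measurable borel" unfolding h_def by measurable
  have tr_int: "integrable M (\<lambda>w. g (X i w))" if "i<n" "integrable \<mu> g" "g \<in> borel_measurable borel" for i and g :: "real \<times> real \<Rightarrow> real"
    using that integrable_distr_eq[OF rv[OF that(1)] that(3)] dis[OF that(1)] by simp
  have tr_exp: "(\<integral>w. g (X i w) \<partial>M) = (\<integral>z. g z \<partial>\<mu>)" if "i<n" "g \<in> borel_measurable borel" for i and g :: "real \<times> real \<Rightarrow> real"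
    using integral_distr[OF rv[OF that(1)] that(2)] dis[OF that(1)] by simp
  note hi = mu_int[OF mu _ U4 V4, folded h_def]
  show Wi: "integrable M (\<lambda>w. fst (X i w) * snd (X i w))" if "i<n" for i
    using tr_int[OF that hi(1)[OF smu[OF that]] hm] unfolding h_def by simp
  show "(\<integral>w. fst (X i w) * snd (X i w) \<partial>M) = (\<integral>z. fst z * snd z \<partial>\<mu>)" if "i<n" for i
    using tr_exp[OF that hm] unfolding h_def .
  have h2m: "(\<lambda>z. (h z)^2) \<in> borel_measurable borel" by measurable
  have ii: "integrable M (\<lambda>w. (h (X i w))^2)" "(\<integral>w. (h (X i w))^2 \<partial>M) = (\<integral>z. (fst z * snd z)^2 \<partial>\<mu>)" if "i<n" for i
    using tr_int[OF that hi(2)[OF smu[OF that]] h2m] tr_exp[OF that h2m] unfolding h_def by auto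
  have indh: "indep_vars (\<lambda>_. borel) (\<lambda>i w. h (X i w)) {..<n}"
    by (rule indep_vars_compose2[OF ind]) simp
  have ij: "integrable M (\<lambda>w. h (X i w) * h (X j w))"
      "(\<integral>w. h (X i w) * h (X j w) \<partial>M) = (\<integral>z. fst z * snd z \<partial>\<mu>)^2"
    if "i<n" "j<n" "i \<noteq> j" for i j
  proof -
    have I: "indep_vars (\<lambda>_. borel) (\<lambda>i w. h (X i w)) {i, j}"
      by (rule indep_vars_subset[OF indh]) (use that in auto)
    have int: "integrable M (\<lambda>w. h (X l w))" if "l \<in> {i,j}" for l
      using Wi that \<open>i<n\<close> \<open>j<n\<close> unfolding h_def by auto
    have e: "(\<integral>w. h (X l w) \<partial>M) = (\<integral>z. fst z * snd z \<partial>\<mu>)" if "l<n" for l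
      using tr_exp[OF that hm] unfolding h_def .
    show "integrable M (\<lambda>w. h (X i w) * h (X j w))"
      using indep_vars_integrable[OF _ I int] that by simp
    show "(\<integral>w. h (X i w) * h (X j w) \<partial>M) = (\<integral>z. fst z * snd z \<partial>\<mu>)^2"
      using indep_vars_lebesgue_integral[OF _ I int] that e by (simp add: power2_eq_square)
  qed
  show "integrable M (\<lambda>w. (fst (X i w) * snd (X i w)) * (fst (X j w) * snd (X j w)))" if "i<n" "j<n" for i j
    using ii(1)[of i] ij(1)[of i j] that unfolding h_def by (cases "i = j") (auto simp: power2_eq_square)
  show "(\<integral>w. (fst (X i w) * snd (X i w)) * (fst (X j w) * snd (X j w)) \<partial>M)
          = (if i = j then (\<integral>z. (fst z * snd z)^2 \<partial>\<mu>) else (\<integral>z. fst z * snd z \<partial>\<mu>)^2)" if "i<n" "j<n" for i j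
    using ii(2)[of i] ij(2)[of i j] that unfolding h_def by (cases "i = j") (auto simp: power2_eq_square)
qed




lemma (in prob_space) ind_moments:
  fixes k :: "nat \<Rightarrow> 'a \<Rightarrow> 'b"
  assumes ind: "indep_vars (\<lambda>_. count_space UNIV) k T"
    and pk0: "\<forall>t\<in>T. \<forall>i\<in>S. measure M {w\<in>space M. k t w = i} = q i"
  shows "\<And>a i. a \<in> T \<Longrightarrow> integrable M (\<lambda>w. if k a w = i then 1 else 0::real)"
    and "\<And>a i. a \<in> T \<Longrightarrow> i \<in> S \<Longrightarrow> (\<integral>w. (if k a w = i then 1 else 0::real) \<partial>M) = q i"
    and "\<And>a b i j. a \<in> T \<Longrightarrow> b \<in> T \<Longrightarrow> integrable M (\<lambda>w. (if k a w = i then 1 else 0::real) * (if k b w = j then 1 else 0))"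
    and "\<And>a b i j. a \<in> T \<Longrightarrow> b \<in> T \<Longrightarrow> i \<in> S \<Longrightarrow> j \<in> S \<Longrightarrow>
       (\<integral>w. (if k a w = i then 1 else 0::real) * (if k b w = j then 1 else 0) \<partial>M)
        = (if a = b then (if i = j then q i else 0) else q i * q j)"
proof -
  note pk = pk0[rule_format]
  have rv[measurable]: "k t \<in> measurable M (count_space UNIV)" if "t \<in> T" for t
    using ind that unfolding indep_vars_def2 by auto
  have mi[measurable]: "(\<lambda>w. if k a w = i then 1 else 0::real) \<in> borel_measurable M" if "a \<in> T" for a i
    using that by measurable
  show I1: "integrable M (\<lambda>w. if k a w = i then 1 else 0::real)" if "a \<in> T" for a i
    by (rule integrable_const_bound[where B=1]) (use that in auto)
  have E1: "(\<integral>w. (if k a w = i then 1 else 0::real) \<partial>M) = measure M {w\<in>space M. k a w = i}" for a i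
  proof -
    have "(\<lambda>w. if k a w = i then 1 else 0::real) = indicator {w. k a w = i}"
      by (auto simp: indicator_def)
    then show ?thesis by (simp add: Collect_conj_eq Int_commute)
  qed
  show "(\<integral>w. (if k a w = i then 1 else 0::real) \<partial>M) = q i" if "a \<in> T" "i \<in> S" for a i
    using E1 pk that by simp
  show "integrable M (\<lambda>w. (if k a w = i then 1 else 0::real) * (if k b w = j then 1 else 0))" if "a \<in> T" "b \<in> T" for a b i j
    by (rule integrable_const_bound[where B=1]) (use that in auto)
  show "(\<integral>w. (if k a w = i then 1 else 0::real) * (if k b w = j then 1 else 0) \<partial>M)
        = (if a = b then (if i = j then q i else 0) else q i * q j)"
    if "a \<in> T" "b \<in> T" "i \<in> S" "j \<in> S" for a b i j
  proof (cases "a = b")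
    case True
    have "(\<lambda>w. (if k a w = i then 1 else 0::real) * (if k b w = j then 1 else 0))
       = (\<lambda>w. if i = j then (if k a w = i then 1 else 0) else 0)"
      using True by auto
    then show ?thesis using True E1 pk that by simp
  next
    case False
    define Y where "Y l x = (if x = (if l = a then i else j) then 1 else 0::real)" for l x
    have I: "indep_vars (\<lambda>_. borel) (\<lambda>l w. Y l (k l w)) {a, b}"
      by (rule indep_vars_subset[OF indep_vars_compose2[OF ind]]) (use that in auto)
    have int: "integrable M (\<lambda>w. Y l (k l w))" if "l \<in> {a,b}" for l
      using I1 that \<open>a \<in> T\<close> \<open>b \<in> T\<close> False unfolding Y_def by auto
    have "(\<integral>w. (\<Prod>l\<in>{a,b}. Y l (k l w)) \<partial>M) = (\<Prod>l\<in>{a,b}. (\<integral>w. Y l (k l w) \<partial>M))"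
      by (rule indep_vars_lebesgue_integral[OF _ I int]) auto
    then show ?thesis using False E1 pk that unfolding Y_def by simp
  qed
qed




lemma sum_if_eq: "(\<Sum>a<m. \<Sum>b<m. (if a = b then A else B)) = real m * A + (real m * real m - real m) * (B::real)"
proof -
  have "(\<Sum>a<m. \<Sum>b<m. (if a = b then A else B)) = (\<Sum>a<m. \<Sum>b<m. (B + (if a = b then A - B else 0)))"
    by (intro sum.cong refl) auto
  also have "\<dots> = (\<Sum>a<m. real m * B + (A - B))"
    by (simp add: sum.distrib)
  finally show ?thesis by (simp add: sum.distrib algebra_simps)
qed

lemma (in prob_space) Z_moments:
  fixes Ind :: "nat \<Rightarrow> nat \<Rightarrow> 'a \<Rightarrow> real" and m :: nat and q :: "nat \<Rightarrow> real" and s c :: real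
  assumes I1: "\<And>a i. a < m \<Longrightarrow> integrable M (Ind a i)"
    and E1: "\<And>a i. a < m \<Longrightarrow> i \<in> S \<Longrightarrow> (\<integral>w. Ind a i w \<partial>M) = q i"
    and I2: "\<And>a b i j. a < m \<Longrightarrow> b < m \<Longrightarrow> integrable M (\<lambda>w. Ind a i w * Ind b j w)"
    and E2: "\<And>a b i j. a < m \<Longrightarrow> b < m \<Longrightarrow> i \<in> S \<Longrightarrow> j \<in> S \<Longrightarrow>
       (\<integral>w. Ind a i w * Ind b j w \<partial>M) = (if a = b then (if i = j then q i else 0) else q i * q j)"
  shows "integrable M (\<lambda>w. s * (c * (\<Sum>a<m. Ind a i w) - 1))"
    and "i \<in> S \<Longrightarrow> (\<integral>w. s * (c * (\<Sum>a<m. Ind a i w) - 1) \<partial>M) = s * (c * m * q i - 1)"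
    and "integrable M (\<lambda>w. s * (c * (\<Sum>a<m. Ind a i w) - 1) * (s * (c * (\<Sum>a<m. Ind a j w) - 1)))"
    and "i \<in> S \<Longrightarrow> j \<in> S \<Longrightarrow> (\<integral>w. s * (c * (\<Sum>a<m. Ind a i w) - 1) * (s * (c * (\<Sum>a<m. Ind a j w) - 1)) \<partial>M)
          = s^2 * (c^2 * (m * (if i = j then q i else 0) + (real m * real m - real m) * (q i * q j)) - c * m * q i - c * m * q j + 1)"
proof -
  define N where "N i w = (\<Sum>a<m. Ind a i w)" for i w
  have NI: "integrable M (N i)" for i unfolding N_def by (intro Bochner_Integration.integrable_sum I1) auto
  have NE: "i \<in> S \<Longrightarrow> (\<integral>w. N i w \<partial>M) = m * q i" for i
    unfolding N_def by (subst Bochner_Integration.integral_sum) (auto intro: I1 simp: E1)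
  have NN: "N i w * N j w = (\<Sum>a<m. \<Sum>b<m. Ind a i w * Ind b j w)" for i j w
    unfolding N_def by (simp add: sum_product)
  have NNI: "integrable M (\<lambda>w. N i w * N j w)" for i j
    unfolding NN by (intro Bochner_Integration.integrable_sum I2) auto
  have NNE: "(\<integral>w. N i w * N j w \<partial>M) = m * (if i = j then q i else 0) + (real m * real m - real m) * (q i * q j)"
    if "i \<in> S" "j \<in> S" for i j
  proof -
    have "(\<integral>w. N i w * N j w \<partial>M) = (\<Sum>a<m. \<Sum>b<m. (\<integral>w. Ind a i w * Ind b j w \<partial>M))"
      unfolding NN
      apply (subst Bochner_Integration.integral_sum)
       apply (auto intro!: Bochner_Integration.integrable_sum I2)
      apply (intro sum.cong refl)
      apply (subst Bochner_Integration.integral_sum)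
       apply (auto intro!: I2)
      done
    also have "\<dots> = (\<Sum>a<m. \<Sum>b<m. (if a = b then (if i = j then q i else 0) else q i * q j))"
      using that by (intro sum.cong refl) (simp add: E2)
    finally show ?thesis by (simp add: sum_if_eq)
  qed
  show "integrable M (\<lambda>w. s * (c * (\<Sum>a<m. Ind a i w) - 1))"
    using NI[of i] unfolding N_def by auto
  show "(\<integral>w. s * (c * (\<Sum>a<m. Ind a i w) - 1) \<partial>M) = s * (c * m * q i - 1)" if "i \<in> S"
    using NI[of i] NE[OF that] unfolding N_def by (simp add: prob_space)
  have eq: "s * (c * (\<Sum>a<m. Ind a i w) - 1) * (s * (c * (\<Sum>a<m. Ind a j w) - 1))
     = s^2 * (c^2 * (N i w * N j w) - c * N i w - c * N j w + 1)" for w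
    unfolding N_def by (simp add: algebra_simps power2_eq_square)
  show "integrable M (\<lambda>w. s * (c * (\<Sum>a<m. Ind a i w) - 1) * (s * (c * (\<Sum>a<m. Ind a j w) - 1)))"
    unfolding eq using NI NNI by auto
  show "(\<integral>w. s * (c * (\<Sum>a<m. Ind a i w) - 1) * (s * (c * (\<Sum>a<m. Ind a j w) - 1)) \<partial>M)
          = s^2 * (c^2 * (m * (if i = j then q i else 0) + (real m * real m - real m) * (q i * q j)) - c * m * q i - c * m * q j + 1)"
    if "i \<in> S" "j \<in> S"
    unfolding eq using NI NNI NE that NNE[OF that] by (simp add: prob_space)
qed




lemma sum_if_split: fixes i n :: nat shows "(\<Sum>j<n. (E j::real) * (if i = j then s2 else t)) = t * (\<Sum>j<n. E j) + (if i < n then (s2 - t) * E i else 0)"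
proof -
  have "(\<Sum>j<n. E j * (if i = j then s2 else t)) = (\<Sum>j<n. t * E j + (if i = j then (s2 - t) * E j else 0))"
    by (intro sum.cong) (auto simp: algebra_simps)
  also have "\<dots> = t * (\<Sum>j<n. E j) + (\<Sum>j\<in>{..<n}. if i = j then (s2 - t) * E j else 0)"
    by (simp add: sum.distrib sum_distrib_left)
  also have "(\<Sum>j\<in>{..<n}. if i = j then (s2 - t) * E j else 0) = (if i \<in> {..<n} then (s2 - t) * E i else 0)"
    by (rule sum.delta') simp
  finally show ?thesis by simp
qed

lemma RS_alg:
  fixes m n :: nat and p :: "nat \<Rightarrow> real" and s c mu1 s2 :: real
  assumes m1: "1 \<le> m" and n1: "1 \<le> n" and ps: "(\<Sum>i<n. p i) = 1"
    and s: "s = sqrt m / n" and c: "c = real n / real m"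
  shows "(\<Sum>i<n. s * (c * m * p i - 1) * mu1) = 0"
    and "(\<Sum>i<n. \<Sum>j<n. (s^2 * (c^2 * (m * (if i = j then p i else 0) + (real m * real m - real m) * (p i * p j)) - c * m * p i - c * m * p j + 1)) * (if i = j then s2 else mu1^2))
        = (s2 - mu1^2) * (1 + (real m - 1) * (\<Sum>i<n. (p i)^2) - real m / real n)"
proof -
  have cm: "c * m = n" using m1 unfolding c by simp
  have s2: "s^2 = m / n^2" unfolding s by (simp add: power_divide)
  show "(\<Sum>i<n. s * (c * m * p i - 1) * mu1) = 0"
    unfolding cm using ps by (simp add: sum_distrib_left[symmetric] sum_distrib_right[symmetric] sum_subtractf algebra_simps)
  define E where "E i j = s^2 * (c^2 * (m * (if i = j then p i else 0) + (real m * real m - real m) * (p i * p j)) - c * m * p i - c * m * p j + 1)" for i j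
  have row: "(\<Sum>j<n. E i j) = 0" if "i < n" for i
  proof -
    have d1: "(\<Sum>j<n. (if i = j then p i else 0)) = p i"
      using that by (subst sum.delta') auto
    have "(\<Sum>j<n. E i j) = (\<Sum>j<n. (s^2*(c^2*m)) * (if i=j then p i else 0) + (s^2*c^2*(real m*real m-real m)*p i) * p j - s^2*n*p i - (s^2*n) * p j + s^2)"
      by (intro sum.cong) (simp_all add: E_def cm algebra_simps)
    also have "\<dots> = (s^2*(c^2*m)) * (\<Sum>j<n. (if i=j then p i else 0)) + (s^2*c^2*(real m*real m-real m)*p i) * (\<Sum>j<n. p j) - n * (s^2*n*p i) - (s^2*n) * (\<Sum>j<n. p j) + n * s^2"
      by (simp only: sum.distrib sum_subtractf sum_distrib_left[symmetric] sum_constant card_lessThan) (simp add: mult_ac)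
    also have "\<dots> = s^2 * p i * ((c * m)^2 - n * n)"
      unfolding d1 ps by (simp add: algebra_simps power2_eq_square)
    also have "\<dots> = 0" unfolding cm by (simp add: power2_eq_square)
    finally show ?thesis .
  qed
  have diag: "(\<Sum>i<n. E i i) = 1 + (real m - 1) * (\<Sum>i<n. (p i)^2) - real m / real n"
  proof -
    have "(\<Sum>i<n. E i i) = (\<Sum>i<n. (s^2*(c^2*m)) * p i + (s^2*c^2*(real m*real m-real m)) * (p i)^2 - (2 * (s^2 * n)) * p i + s^2)"
      by (intro sum.cong) (simp_all add: E_def cm algebra_simps power2_eq_square)
    also have "\<dots> = (s^2*(c^2*m)) * (\<Sum>i<n. p i) + (s^2*c^2*(real m*real m-real m)) * (\<Sum>i<n. (p i)^2) - (2 * (s^2 * n)) * (\<Sum>i<n. p i) + n * s^2"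
      by (simp only: sum.distrib sum_subtractf sum_distrib_left[symmetric] sum_constant card_lessThan)
    also have "\<dots> = s^2 * (c^2 * m + c^2 * (real m * real m - real m) * (\<Sum>i<n. (p i)^2) - 2 * n + n)"
      unfolding ps by (simp add: algebra_simps)
    also have "\<dots> = 1 + (real m - 1) * (\<Sum>i<n. (p i)^2) - real m / real n"
      unfolding s2 c using m1 n1 by (simp add: field_simps power2_eq_square)
    finally show ?thesis .
  qed
  have "(\<Sum>i<n. \<Sum>j<n. E i j * (if i = j then s2 else mu1^2)) = (\<Sum>i<n. mu1^2 * (\<Sum>j<n. E i j) + (s2 - mu1^2) * E i i)"
    by (intro sum.cong refl) (simp add: sum_if_split)
  also have "\<dots> = (s2 - mu1^2) * (\<Sum>i<n. E i i)"
    using row by (simp add: sum.distrib sum_distrib_left)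
  finally show "(\<Sum>i<n. \<Sum>j<n. (s^2 * (c^2 * (m * (if i = j then p i else 0) + (real m * real m - real m) * (p i * p j)) - c * m * p i - c * m * p j + 1)) * (if i = j then s2 else mu1^2))
        = (s2 - mu1^2) * (1 + (real m - 1) * (\<Sum>i<n. (p i)^2) - real m / real n)"
    unfolding E_def[symmetric] diag .
qed

lemma BS_alg:
  fixes m n :: nat and s c q mu1 s2 :: real
  assumes m1: "1 \<le> m" and n1: "1 \<le> n"
    and s: "s = sqrt m / n" and c: "c = real n / real m" and q: "q = real m / real n"
  shows "(\<Sum>i<n. s * (c * q - 1) * mu1) = 0"
    and "(\<Sum>i<n. \<Sum>j<n. (s^2 * (c^2 * (if i = j then q else q * q) - c * q - c * q + 1)) * (if i = j then s2 else mu1^2))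
        = s2 * (1 - real m / real n)"
proof -
  have cq: "c * q = 1" using m1 n1 unfolding c q by simp
  show "(\<Sum>i<n. s * (c * q - 1) * mu1) = 0" by (simp add: cq)
  have e: "s^2 * (c^2 * (if i = j then q else q * q) - c * q - c * q + 1) = (if i = j then s^2 * (c - 1) else 0)" for i j :: nat
  proof -
    have "c^2 * q = c" "c^2 * (q * q) = 1" using cq by (simp_all add: power2_eq_square) (metis mult.assoc mult.commute mult_1)+
    then show ?thesis using cq by auto
  qed
  have "(\<Sum>i<n. \<Sum>j<n. (s^2 * (c^2 * (if i = j then q else q * q) - c * q - c * q + 1)) * (if i = j then s2 else mu1^2))
     = (\<Sum>i<n. s^2 * (c - 1) * s2)"
  proof (intro sum.cong refl)
    fix i assume i: "i \<in> {..<n}"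
    have "(\<Sum>j<n. (s^2 * (c^2 * (if i = j then q else q * q) - c * q - c * q + 1)) * (if i = j then s2 else mu1^2))
       = (\<Sum>j\<in>{..<n}. if i = j then s^2 * (c - 1) * s2 else 0)"
      unfolding e by (intro sum.cong) auto
    also have "\<dots> = s^2 * (c - 1) * s2" using i by (subst sum.delta') auto
    finally show "(\<Sum>j<n. (s^2 * (c^2 * (if i = j then q else q * q) - c * q - c * q + 1)) * (if i = j then s2 else mu1^2)) = s^2 * (c - 1) * s2" .
  qed
  also have "\<dots> = s2 * (1 - real m / real n)"
    using m1 n1 unfolding s c by (simp add: power_divide field_simps power2_eq_square)
  finally show "(\<Sum>i<n. \<Sum>j<n. (s^2 * (c^2 * (if i = j then q else q * q) - c * q - c * q + 1)) * (if i = j then s2 else mu1^2))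
        = s2 * (1 - real m / real n)" .
qed


lemma (in prob_space) BZ_moments:
  fixes b :: "nat \<Rightarrow> 'a \<Rightarrow> real" and s c q :: real
  assumes I1: "\<And>a. a<n \<Longrightarrow> integrable M (b a)" and E1: "\<And>a. a<n \<Longrightarrow> (\<integral>w. b a w \<partial>M) = q"
   and I2: "\<And>a a'. a<n \<Longrightarrow> a'<n \<Longrightarrow> integrable M (\<lambda>w. b a w * b a' w)"
   and E2: "\<And>a a'. a<n \<Longrightarrow> a'<n \<Longrightarrow> (\<integral>w. b a w * b a' w \<partial>M) = (if a = a' then q else q * q)"
  shows "i<n \<Longrightarrow> integrable M (\<lambda>w. s * (c * b i w - 1))"
   and "i<n \<Longrightarrow> (\<integral>w. s * (c * b i w - 1) \<partial>M) = s * (c * q - 1)"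
   and "i<n \<Longrightarrow> j<n \<Longrightarrow> integrable M (\<lambda>w. s * (c * b i w - 1) * (s * (c * b j w - 1)))"
   and "i<n \<Longrightarrow> j<n \<Longrightarrow> (\<integral>w. s * (c * b i w - 1) * (s * (c * b j w - 1)) \<partial>M)
          = s^2 * (c^2 * (if i = j then q else q * q) - c * q - c * q + 1)"
proof -
  have eq: "s * (c * b i w - 1) * (s * (c * b j w - 1)) = s^2 * (c^2 * (b i w * b j w) - c * b i w - c * b j w + 1)" for i j w
    by (simp add: algebra_simps power2_eq_square)
  show "integrable M (\<lambda>w. s * (c * b i w - 1))" if "i<n" using I1[OF that] by auto
  show "(\<integral>w. s * (c * b i w - 1) \<partial>M) = s * (c * q - 1)" if "i<n"
    using I1[OF that] E1[OF that] by (simp add: prob_space)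
  show "integrable M (\<lambda>w. s * (c * b i w - 1) * (s * (c * b j w - 1)))" if "i<n" "j<n"
    unfolding eq using I1 I2 that by auto
  show "(\<integral>w. s * (c * b i w - 1) * (s * (c * b j w - 1)) \<partial>M)
          = s^2 * (c^2 * (if i = j then q else q * q) - c * q - c * q + 1)" if "i<n" "j<n"
    unfolding eq using I1 I2 E1 E2 that by (simp add: prob_space)
qed




lemma sum_ind_delta: fixes x n :: nat shows "(\<Sum>i<n. (if x = i then 1 else 0) * (u i::real)) = (if x < n then u x else 0)"
proof -
  have "(\<Sum>i<n. (if x = i then 1 else 0) * u i) = (\<Sum>i\<in>{..<n}. if x = i then u i else 0)"
    by (intro sum.cong) auto
  also have "\<dots> = (if x \<in> {..<n} then u x else 0)" by (rule sum.delta') simp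
  finally show ?thesis by simp
qed

lemma RS_G:
  fixes k :: "nat \<Rightarrow> nat" and u v :: "nat \<Rightarrow> real"
  assumes "1 \<le> m"
  shows "sketch_err n m m (RS_matrix n m k) u v
    = (\<Sum>i<n. (sqrt m / n * (n / m * (\<Sum>a<m. if k a = i then 1 else 0) - 1)) * (u i * v i))"
proof -
  have sq: "sqrt (real n / real m) * sqrt (real n / real m) = real n / real m" by simp
  have row: "(\<Sum>i<n. RS_matrix n m k a i * u i) * (\<Sum>j<n. RS_matrix n m k a j * v j)
      = n / m * (\<Sum>i<n. (if k a = i then 1 else 0) * (u i * v i))" for a
  proof -
    have "(\<Sum>i<n. RS_matrix n m k a i * u i) = sqrt (n/m) * (\<Sum>i<n. (if k a = i then 1 else 0) * u i)"
      "(\<Sum>i<n. RS_matrix n m k a i * v i) = sqrt (n/m) * (\<Sum>i<n. (if k a = i then 1 else 0) * v i)"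
      unfolding RS_matrix_def by (simp_all add: sum_distrib_left mult.assoc)
    then show ?thesis unfolding sum_ind_delta using sq by (simp add: algebra_simps)
  qed
  have "quadPi m n (RS_matrix n m k) u v = n / m * (\<Sum>a<m. \<Sum>i<n. (if k a = i then 1 else 0) * (u i * v i))"
    unfolding quadPi_def row by (simp add: sum_distrib_left)
  also have "\<dots> = n / m * (\<Sum>i<n. (\<Sum>a<m. if k a = i then 1 else 0) * (u i * v i))"
    by (subst sum.swap) (simp add: sum_distrib_right)
  finally have q: "quadPi m n (RS_matrix n m k) u v = n / m * (\<Sum>i<n. (\<Sum>a<m. if k a = i then 1 else 0) * (u i * v i))" .
  show ?thesis
    unfolding sketch_err_def q
    by (simp add: sum_distrib_left sum_subtractf[symmetric] algebra_simps diff_divide_distrib sum_divide_distrib)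
qed

lemma BS_G:
  fixes B :: "nat \<Rightarrow> bool" and u v :: "nat \<Rightarrow> real"
  shows "sketch_err n m n (BS_matrix n m B) u v
    = (\<Sum>i<n. (sqrt m / n * (n / m * (if B i then 1 else 0) - 1)) * (u i * v i))"
proof -
  have sq: "sqrt (real n / real m) * sqrt (real n / real m) = real n / real m" by simp
  have row: "(\<Sum>i<n. BS_matrix n m B a i * u i) * (\<Sum>j<n. BS_matrix n m B a j * v j)
      = n / m * ((if B a then 1 else 0) * (u a * v a))" if "a < n" for a
  proof -
    have "(\<Sum>i<n. BS_matrix n m B a i * u i) = sqrt (n/m) * (\<Sum>i<n. (if a = i then 1 else 0) * ((if B a then 1 else 0) * u i))"
      "(\<Sum>i<n. BS_matrix n m B a i * v i) = sqrt (n/m) * (\<Sum>i<n. (if a = i then 1 else 0) * ((if B a then 1 else 0) * v i))"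
      unfolding BS_matrix_def sum_distrib_left by (intro conjI sum.cong refl; auto)+
    then show ?thesis unfolding sum_ind_delta using sq that by (simp add: algebra_simps)
  qed
  have q: "quadPi n n (BS_matrix n m B) u v = n / m * (\<Sum>a<n. (if B a then 1 else 0) * (u a * v a))"
  proof -
    have "quadPi n n (BS_matrix n m B) u v = (\<Sum>a<n. n / m * ((if B a then 1 else 0) * (u a * v a)))"
      unfolding quadPi_def by (intro sum.cong refl row) simp
    then show ?thesis by (simp add: sum_distrib_left)
  qed
  show ?thesis
    unfolding sketch_err_def q
    by (simp add: sum_distrib_left sum_subtractf[symmetric] algebra_simps diff_divide_distrib sum_divide_distrib)
qed

lemma RS_fixed:
  fixes M :: "'w measure" and X :: "nat \<Rightarrow> 'w \<Rightarrow> real \<times> real" and \<mu> :: "(real \<times> real) measure"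
    and p :: "nat \<Rightarrow> real" and k :: "nat \<Rightarrow> 'w \<Rightarrow> nat"
  assumes M: "prob_space M" and mu: "prob_space \<mu>" and iid: "iid_pairs M n X \<mu>"
    and U4: "integrable \<mu> (\<lambda>z. (fst z)^4)" and V4: "integrable \<mu> (\<lambda>z. (snd z)^4)"
    and RS: "RS_sampling M n m p k X" and n1: "1 \<le> n" and m1: "1 \<le> m" and psum: "(\<Sum>i<n. p i) = 1"
  shows "MSE M (\<lambda>w. sketch_err n m m (RS_matrix n m (\<lambda>t. k t w)) (\<lambda>i. fst (X i w)) (\<lambda>i. snd (X i w)))
     = ((\<integral>z. (fst z * snd z)^2 \<partial>\<mu>) - (\<integral>z. fst z * snd z \<partial>\<mu>)^2)
        * (1 + (real m - 1) * (\<Sum>i<n. (p i)^2) - real m / real n)"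
proof -
  interpret prob_space M by (rule M)
  define s where "s = sqrt m / n"
  define c where "c = real n / real m"
  define Y1 where "Y1 w = restrict (\<lambda>i. X i w) {..<n}" for w
  define Y2 where "Y2 w = restrict (\<lambda>t. k t w) {..<m}" for w
  define Wf where "Wf i f = fst (f i) * snd (f i)" for i and f :: "nat \<Rightarrow> real \<times> real"
  define Zf where "Zf i f = s * (c * (\<Sum>a<m. if f a = i then 1 else 0) - 1)" for i and f :: "nat \<Rightarrow> nat"
  define N1 where "N1 = PiM {..<n} (\<lambda>_. borel :: (real \<times> real) measure)"
  define N2 where "N2 = PiM {..<m} (\<lambda>_. count_space (UNIV::nat set))"
  have indk: "indep_vars (\<lambda>_. count_space UNIV) k {..<m}"
    and pk: "\<forall>t\<in>{..<m}. \<forall>i\<in>{..<n}. measure M {w \<in> space M. k t w = i} = p i"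
    and Y1m: "Y1 \<in> measurable M N1" and Y2m: "Y2 \<in> measurable M N2"
    and indep: "indep_set (gen_sig M Y1 N1) (gen_sig M Y2 N2)"
    using RS unfolding RS_sampling_def gen_sig_def sets_vimage_algebra Y1_def Y2_def N1_def N2_def
    by auto
  have Weq: "Wf i (Y1 w) = fst (X i w) * snd (X i w)" if "i<n" for i w
    using that unfolding Wf_def Y1_def by simp
  have Zeq: "Zf i (Y2 w) = s * (c * (\<Sum>a<m. if k a w = i then 1 else 0) - 1)" for i w
    unfolding Zf_def Y2_def by (intro arg_cong2[where f="(*)"] refl arg_cong2[where f="(-)"] sum.cong) auto
  have G: "sketch_err n m m (RS_matrix n m (\<lambda>t. k t w)) (\<lambda>i. fst (X i w)) (\<lambda>i. snd (X i w))
      = (\<Sum>i<n. Zf i (Y2 w) * Wf i (Y1 w))" for w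
    unfolding RS_G[OF m1] Zeq s_def c_def by (intro sum.cong refl) (simp add: Weq)
  note WM = W_moments[OF mu iid U4 V4]
  note IM = ind_moments[OF indk pk]
  note ZM = Z_moments[where m=m and Ind="\<lambda>a i w. if k a w = i then 1 else 0" and S="{..<n}" and q=p and s=s and c=c, OF IM(1) IM(2) IM(3) IM(4)]
  have hm: "(\<lambda>z::real\<times>real. fst z * snd z) \<in> borel_measurable borel" by measurable
  have Wm: "Wf i \<in> borel_measurable N1" if "i<n" for i
  proof -
    have "i \<in> {..<n}" using that by simp
    from measurable_compose[OF measurable_component_singleton[OF this] hm]
    show ?thesis unfolding Wf_def N1_def by simp
  qed
  have Zm: "Zf i \<in> borel_measurable N2" if "i<n" for i unfolding Zf_def N2_def by measurable
  have Wi: "integrable M (\<lambda>w. Wf i (Y1 w) * Wf j (Y1 w))" if "i<n" "j<n" for i j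
    using WM(3)[OF that] by (simp add: Weq that)
  have Wi1: "integrable M (\<lambda>w. Wf i (Y1 w))" if "i<n" for i
    using WM(1)[OF that] by (simp add: Weq that)
  have Zi: "integrable M (\<lambda>w. Zf i (Y2 w) * Zf j (Y2 w))" if "i<n" "j<n" for i j
    using ZM(3) by (simp add: Zeq)
  have Zi1: "integrable M (\<lambda>w. Zf i (Y2 w))" if "i<n" for i
    using ZM(1) by (simp add: Zeq)
  have C1: "(\<integral>w. (\<Sum>i<n. Zf i (Y2 w) * Wf i (Y1 w)) \<partial>M)
          = (\<Sum>i<n. (\<integral>w. Zf i (Y2 w) \<partial>M) * (\<integral>w. Wf i (Y1 w) \<partial>M))"
    by (rule core(1)[OF indep Y1m Y2m]) (auto intro: Wm Zm Wi Wi1 Zi Zi1)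
  have C2: "(\<integral>w. (\<Sum>i<n. Zf i (Y2 w) * Wf i (Y1 w))^2 \<partial>M)
          = (\<Sum>i<n. \<Sum>j<n. (\<integral>w. Zf i (Y2 w) * Zf j (Y2 w) \<partial>M) * (\<integral>w. Wf i (Y1 w) * Wf j (Y1 w) \<partial>M))"
    by (rule core(2)[OF indep Y1m Y2m]) (auto intro: Wm Zm Wi Wi1 Zi Zi1)
  have EG: "(\<integral>w. (\<Sum>i<n. Zf i (Y2 w) * Wf i (Y1 w)) \<partial>M) = 0"
  proof -
    have "(\<integral>w. (\<Sum>i<n. Zf i (Y2 w) * Wf i (Y1 w)) \<partial>M) = (\<Sum>i<n. s * (c * m * p i - 1) * (\<integral>z. fst z * snd z \<partial>\<mu>))"
    proof (unfold C1, intro sum.cong refl)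
      fix i assume i: "i \<in> {..<n}"
      have EZ: "(\<integral>w. s * (c * (\<Sum>a<m. if k a w = i then 1 else 0) - 1) \<partial>M) = s * (c * m * p i - 1)"
        by (rule ZM(2)) (use i in auto)
      show "(\<integral>w. Zf i (Y2 w) \<partial>M) * (\<integral>w. Wf i (Y1 w) \<partial>M) = s * (c * m * p i - 1) * (\<integral>z. fst z * snd z \<partial>\<mu>)"
        using i by (simp only: Zeq EZ) (simp add: Weq WM(2))
    qed
    also have "\<dots> = 0" by (rule RS_alg(1)[OF m1 n1 psum s_def c_def])
    finally show ?thesis .
  qed
  have EG2: "(\<integral>w. (\<Sum>i<n. Zf i (Y2 w) * Wf i (Y1 w))^2 \<partial>M)
     = ((\<integral>z. (fst z * snd z)^2 \<partial>\<mu>) - (\<integral>z. fst z * snd z \<partial>\<mu>)^2)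
        * (1 + (real m - 1) * (\<Sum>i<n. (p i)^2) - real m / real n)"
  proof -
    have "(\<integral>w. (\<Sum>i<n. Zf i (Y2 w) * Wf i (Y1 w))^2 \<partial>M) =
      (\<Sum>i<n. \<Sum>j<n. (s^2 * (c^2 * (m * (if i = j then p i else 0) + (real m * real m - real m) * (p i * p j)) - c * m * p i - c * m * p j + 1)) * (if i = j then (\<integral>z. (fst z * snd z)^2 \<partial>\<mu>) else (\<integral>z. fst z * snd z \<partial>\<mu>)^2))"
    proof (unfold C2, intro sum.cong refl)
      fix i j assume i: "i \<in> {..<n}" and j: "j \<in> {..<n}"
      have EZ: "(\<integral>w. s * (c * (\<Sum>a<m. if k a w = i then 1 else 0) - 1) * (s * (c * (\<Sum>a<m. if k a w = j then 1 else 0) - 1)) \<partial>M)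
          = s^2 * (c^2 * (m * (if i = j then p i else 0) + (real m * real m - real m) * (p i * p j)) - c * m * p i - c * m * p j + 1)"
        by (rule ZM(4)) (use i j in auto)
      show "(\<integral>w. Zf i (Y2 w) * Zf j (Y2 w) \<partial>M) * (\<integral>w. Wf i (Y1 w) * Wf j (Y1 w) \<partial>M) =
        (s^2 * (c^2 * (m * (if i = j then p i else 0) + (real m * real m - real m) * (p i * p j)) - c * m * p i - c * m * p j + 1)) * (if i = j then (\<integral>z. (fst z * snd z)^2 \<partial>\<mu>) else (\<integral>z. fst z * snd z \<partial>\<mu>)^2)"
        using i j by (simp only: Zeq EZ) (simp add: Weq WM(4))
    qed
    also have "\<dots> = ((\<integral>z. (fst z * snd z)^2 \<partial>\<mu>) - (\<integral>z. fst z * snd z \<partial>\<mu>)^2)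
        * (1 + (real m - 1) * (\<Sum>i<n. (p i)^2) - real m / real n)"
      by (rule RS_alg(2)[OF m1 n1 psum s_def c_def])
    finally show ?thesis .
  qed
  show ?thesis
    unfolding MSE_def G EG using EG2 by simp
qed


lemma BS_fixed:
  fixes M :: "'w measure" and X :: "nat \<Rightarrow> 'w \<Rightarrow> real \<times> real" and \<mu> :: "(real \<times> real) measure"
    and B :: "nat \<Rightarrow> 'w \<Rightarrow> bool"
  assumes M: "prob_space M" and mu: "prob_space \<mu>" and iid: "iid_pairs M n X \<mu>"
    and U4: "integrable \<mu> (\<lambda>z. (fst z)^4)" and V4: "integrable \<mu> (\<lambda>z. (snd z)^4)"
    and BS: "BS_sampling M n m B X" and n1: "1 \<le> n" and m1: "1 \<le> m"
  shows "MSE M (\<lambda>w. sketch_err n m n (BS_matrix n m (\<lambda>i. B i w)) (\<lambda>i. fst (X i w)) (\<lambda>i. snd (X i w)))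
     = (\<integral>z. (fst z * snd z)^2 \<partial>\<mu>) * (1 - real m / real n)"
proof -
  interpret prob_space M by (rule M)
  define s where "s = sqrt m / n"
  define c where "c = real n / real m"
  define q where "q = real m / real n"
  define Y1 where "Y1 w = restrict (\<lambda>i. X i w) {..<n}" for w
  define Y2 where "Y2 w = restrict (\<lambda>i. B i w) {..<n}" for w
  define Wf where "Wf i f = fst (f i) * snd (f i)" for i and f :: "nat \<Rightarrow> real \<times> real"
  define Zf where "Zf i f = s * (c * (if f i then 1 else 0) - 1)" for i and f :: "nat \<Rightarrow> bool"
  define N1 where "N1 = PiM {..<n} (\<lambda>_. borel :: (real \<times> real) measure)"
  define N2 where "N2 = PiM {..<n} (\<lambda>_. count_space (UNIV::bool set))"
  have indk: "indep_vars (\<lambda>_. count_space UNIV) B {..<n}"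
    and pk0: "\<And>t. t < n \<Longrightarrow> measure M {w \<in> space M. B t w} = q"
    and Y1m: "Y1 \<in> measurable M N1" and Y2m: "Y2 \<in> measurable M N2"
    and indep: "indep_set (gen_sig M Y1 N1) (gen_sig M Y2 N2)"
    using BS unfolding BS_sampling_def gen_sig_def sets_vimage_algebra Y1_def Y2_def N1_def N2_def q_def
    by auto
  have pk: "\<forall>t\<in>{..<n}. \<forall>i\<in>{True}. measure M {w \<in> space M. B t w = i} = (\<lambda>_. q) i"
    using pk0 by simp
  have Weq: "Wf i (Y1 w) = fst (X i w) * snd (X i w)" if "i<n" for i w
    using that unfolding Wf_def Y1_def by simp
  have Zeq: "Zf i (Y2 w) = s * (c * (if B i w then 1 else 0) - 1)" if "i<n" for i w
    using that unfolding Zf_def Y2_def by simp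
  have G: "sketch_err n m n (BS_matrix n m (\<lambda>i. B i w)) (\<lambda>i. fst (X i w)) (\<lambda>i. snd (X i w))
      = (\<Sum>i<n. Zf i (Y2 w) * Wf i (Y1 w))" for w
    unfolding BS_G s_def c_def by (intro sum.cong refl) (simp add: Weq Zeq s_def c_def)
  note WM = W_moments[OF mu iid U4 V4]
  note IM = ind_moments[where k=B and T="{..<n}" and S="{True}" and q="\<lambda>_. q", OF indk pk]
  have I1: "integrable M (\<lambda>w. if B a w then 1 else 0::real)" if "a<n" for a
  proof -
    have "integrable M (\<lambda>w. if B a w = True then 1 else 0::real)" using IM(1)[where a=a and i=True] that by simp
    then show ?thesis by simp
  qed
  have E1: "(\<integral>w. (if B a w then 1 else 0::real) \<partial>M) = q" if "a<n" for a
  proof -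
    have "(\<integral>w. (if B a w = True then 1 else 0::real) \<partial>M) = q" using IM(2)[where a=a and i=True] that by simp
    then show ?thesis by simp
  qed
  have I2: "integrable M (\<lambda>w. (if B a w then 1 else 0::real) * (if B a' w then 1 else 0))" if "a<n" "a'<n" for a a'
  proof -
    have "integrable M (\<lambda>w. (if B a w = True then 1 else 0::real) * (if B a' w = True then 1 else 0))" using IM(3)[where a=a and b=a' and i=True and j=True] that by simp
    then show ?thesis by simp
  qed
  have E2: "(\<integral>w. (if B a w then 1 else 0::real) * (if B a' w then 1 else 0) \<partial>M) = (if a = a' then q else q * q)"
    if "a<n" "a'<n" for a a'
  proof -
    have "(\<integral>w. (if B a w = True then 1 else 0::real) * (if B a' w = True then 1 else 0) \<partial>M) = (if a = a' then (if True = True then q else 0) else q * q)"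
      using IM(4)[where a=a and b=a' and i=True and j=True] that by simp
    then show ?thesis by simp
  qed
  note ZM = BZ_moments[where n=n and b="\<lambda>a w. if B a w then 1 else 0" and s=s and c=c and q=q, OF I1 E1 I2 E2]
  have hm: "(\<lambda>z::real\<times>real. fst z * snd z) \<in> borel_measurable borel" by measurable
  have Wm: "Wf i \<in> borel_measurable N1" if "i<n" for i
  proof -
    have "i \<in> {..<n}" using that by simp
    from measurable_compose[OF measurable_component_singleton[OF this] hm]
    show ?thesis unfolding Wf_def N1_def by simp
  qed
  have bm: "(\<lambda>x::bool. s * (c * (if x then 1 else 0) - 1)) \<in> borel_measurable (count_space UNIV)" by simp
  have Zm: "Zf i \<in> borel_measurable N2" if "i<n" for i
  proof -
    have "i \<in> {..<n}" using that by simp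
    from measurable_compose[OF measurable_component_singleton[OF this] bm]
    show ?thesis unfolding Zf_def N2_def by simp
  qed
  have Wi: "integrable M (\<lambda>w. Wf i (Y1 w) * Wf j (Y1 w))" if "i<n" "j<n" for i j
    using WM(3)[OF that] by (simp add: Weq that)
  have Wi1: "integrable M (\<lambda>w. Wf i (Y1 w))" if "i<n" for i
    using WM(1)[OF that] by (simp add: Weq that)
  have Zi: "integrable M (\<lambda>w. Zf i (Y2 w) * Zf j (Y2 w))" if "i<n" "j<n" for i j
    using ZM(3) that by (simp add: Zeq that)
  have Zi1: "integrable M (\<lambda>w. Zf i (Y2 w))" if "i<n" for i
    using ZM(1) that by (simp add: Zeq that)
  have C1: "(\<integral>w. (\<Sum>i<n. Zf i (Y2 w) * Wf i (Y1 w)) \<partial>M)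
          = (\<Sum>i<n. (\<integral>w. Zf i (Y2 w) \<partial>M) * (\<integral>w. Wf i (Y1 w) \<partial>M))"
    by (rule core(1)[OF indep Y1m Y2m]) (auto intro: Wm Zm Wi Wi1 Zi Zi1)
  have C2: "(\<integral>w. (\<Sum>i<n. Zf i (Y2 w) * Wf i (Y1 w))^2 \<partial>M)
          = (\<Sum>i<n. \<Sum>j<n. (\<integral>w. Zf i (Y2 w) * Zf j (Y2 w) \<partial>M) * (\<integral>w. Wf i (Y1 w) * Wf j (Y1 w) \<partial>M))"
    by (rule core(2)[OF indep Y1m Y2m]) (auto intro: Wm Zm Wi Wi1 Zi Zi1)
  note ALG = BS_alg[OF m1 n1 s_def c_def q_def]
  have EG: "(\<integral>w. (\<Sum>i<n. Zf i (Y2 w) * Wf i (Y1 w)) \<partial>M) = 0"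
  proof -
    have "(\<integral>w. (\<Sum>i<n. Zf i (Y2 w) * Wf i (Y1 w)) \<partial>M) = (\<Sum>i<n. s * (c * q - 1) * (\<integral>z. fst z * snd z \<partial>\<mu>))"
    proof (unfold C1, intro sum.cong refl)
      fix i assume i: "i \<in> {..<n}"
      have EZ: "(\<integral>w. s * (c * (if B i w then 1 else 0) - 1) \<partial>M) = s * (c * q - 1)"
        by (rule ZM(2)) (use i in auto)
      have Zeq': "Zf i (Y2 w) = s * (c * (if B i w then 1 else 0) - 1)" for w using i Zeq by simp
      show "(\<integral>w. Zf i (Y2 w) \<partial>M) * (\<integral>w. Wf i (Y1 w) \<partial>M) = s * (c * q - 1) * (\<integral>z. fst z * snd z \<partial>\<mu>)"
        using i by (simp only: Zeq' EZ) (simp add: Weq WM(2))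
    qed
    also have "\<dots> = 0" by (rule ALG(1))
    finally show ?thesis .
  qed
  have EG2: "(\<integral>w. (\<Sum>i<n. Zf i (Y2 w) * Wf i (Y1 w))^2 \<partial>M)
     = (\<integral>z. (fst z * snd z)^2 \<partial>\<mu>) * (1 - real m / real n)"
  proof -
    have "(\<integral>w. (\<Sum>i<n. Zf i (Y2 w) * Wf i (Y1 w))^2 \<partial>M) =
      (\<Sum>i<n. \<Sum>j<n. (s^2 * (c^2 * (if i = j then q else q * q) - c * q - c * q + 1)) * (if i = j then (\<integral>z. (fst z * snd z)^2 \<partial>\<mu>) else (\<integral>z. fst z * snd z \<partial>\<mu>)^2))"
    proof (unfold C2, intro sum.cong refl)
      fix i j assume i: "i \<in> {..<n}" and j: "j \<in> {..<n}"
      have EZ: "(\<integral>w. s * (c * (if B i w then 1 else 0) - 1) * (s * (c * (if B j w then 1 else 0) - 1)) \<partial>M)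
          = s^2 * (c^2 * (if i = j then q else q * q) - c * q - c * q + 1)"
        by (rule ZM(4)) (use i j in auto)
      have Zeq': "Zf l (Y2 w) = s * (c * (if B l w then 1 else 0) - 1)" if "l \<in> {..<n}" for l w using that Zeq by simp
      show "(\<integral>w. Zf i (Y2 w) * Zf j (Y2 w) \<partial>M) * (\<integral>w. Wf i (Y1 w) * Wf j (Y1 w) \<partial>M) =
        (s^2 * (c^2 * (if i = j then q else q * q) - c * q - c * q + 1)) * (if i = j then (\<integral>z. (fst z * snd z)^2 \<partial>\<mu>) else (\<integral>z. fst z * snd z \<partial>\<mu>)^2)"
        using i j by (simp only: Zeq'[OF i] Zeq'[OF j] EZ) (simp add: Weq WM(4))
    qed
    also have "\<dots> = (\<integral>z. (fst z * snd z)^2 \<partial>\<mu>) * (1 - real m / real n)"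
      by (rule ALG(2))
    finally show ?thesis .
  qed
  show ?thesis
    unfolding MSE_def G EG using EG2 by simp
qed

theorem theorem3p1:
  fixes M :: "nat \<Rightarrow> 'w measure"
    and X :: "nat \<Rightarrow> nat \<Rightarrow> 'w \<Rightarrow> real \<times> real"
    and \<mu> :: "(real \<times> real) measure"
    and m :: "nat \<Rightarrow> nat"
    and p :: "nat \<Rightarrow> nat \<Rightarrow> real"
    and k :: "nat \<Rightarrow> nat \<Rightarrow> 'w \<Rightarrow> nat"
    and B :: "nat \<Rightarrow> nat \<Rightarrow> 'w \<Rightarrow> bool"
  assumes M: "\<And>n. prob_space (M n)"
    and mu: "prob_space \<mu>"
    and iid: "\<And>n. iid_pairs (M n) n (X n) \<mu>"
    and U4: "integrable \<mu> (\<lambda>z. (fst z)^4)"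
    and V4: "integrable \<mu> (\<lambda>z. (snd z)^4)"
    and m_inf: "filterlim m at_top sequentially"
    and m_n: "(\<lambda>n. real (m n) / real n) \<longlonglongrightarrow> 0"
  shows
   "((\<forall>n. 1 \<le> n \<longrightarrow> (\<forall>i<n. 0 \<le> p n i) \<and> (\<Sum>i<n. p n i) = 1) \<and>
     (\<lambda>n. real (m n) * (\<Sum>i<n. (p n i)^2)) \<longlonglongrightarrow> 0 \<and>
     (\<forall>n. 1 \<le> n \<longrightarrow> RS_sampling (M n) n (m n) (p n) (k n) (X n))
     \<longrightarrow>
     (\<lambda>n. MSE (M n) (\<lambda>w. sketch_err n (m n) (m n) (RS_matrix n (m n) (\<lambda>t. k n t w))
                          (\<lambda>i. fst (X n i w)) (\<lambda>i. snd (X n i w))))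
       \<longlonglongrightarrow> (\<integral>z. (fst z * snd z)^2 \<partial>\<mu>) - (\<integral>z. fst z * snd z \<partial>\<mu>)^2)
  \<and>
    ((\<forall>n. 1 \<le> n \<and> m n \<le> n \<longrightarrow> BS_sampling (M n) n (m n) (B n) (X n))
     \<longrightarrow>
     (\<lambda>n. MSE (M n) (\<lambda>w. sketch_err n (m n) n (BS_matrix n (m n) (\<lambda>i. B n i w))
                          (\<lambda>i. fst (X n i w)) (\<lambda>i. snd (X n i w))))
       \<longlonglongrightarrow> (\<integral>z. (fst z * snd z)^2 \<partial>\<mu>))"
proof -
  let ?s2 = "(\<integral>z. (fst z * snd z)^2 \<partial>\<mu>)"
  let ?m1 = "(\<integral>z. fst z * snd z \<partial>\<mu>)"
  have evm: "eventually (\<lambda>n. 1 \<le> m n) sequentially"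
    using m_inf unfolding filterlim_at_top by blast
  have evn: "eventually (\<lambda>n. 1 \<le> n) sequentially"
    by (rule eventually_ge_at_top)
  have lim_mn: "(\<lambda>n. real (m n) / real n) \<longlonglongrightarrow> 0" by (rule m_n)
  show ?thesis
  proof (intro conjI impI)
    assume H: "(\<forall>n. 1 \<le> n \<longrightarrow> (\<forall>i<n. 0 \<le> p n i) \<and> (\<Sum>i<n. p n i) = 1) \<and>
     (\<lambda>n. real (m n) * (\<Sum>i<n. (p n i)^2)) \<longlonglongrightarrow> 0 \<and>
     (\<forall>n. 1 \<le> n \<longrightarrow> RS_sampling (M n) n (m n) (p n) (k n) (X n))"
    have ev: "eventually (\<lambda>n. MSE (M n) (\<lambda>w. sketch_err n (m n) (m n) (RS_matrix n (m n) (\<lambda>t. k n t w))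
                          (\<lambda>i. fst (X n i w)) (\<lambda>i. snd (X n i w)))
        = (?s2 - ?m1^2) * (1 + (real (m n) - 1) * (\<Sum>i<n. (p n i)^2) - real (m n) / real n)) sequentially"
      using evm evn
    proof eventually_elim
      case (elim n)
      then show ?case using RS_fixed[OF M mu iid U4 V4, of n "m n" "p n" "k n"] H by auto
    qed
    have L1: "(\<lambda>n. real (m n) * (\<Sum>i<n. (p n i)^2)) \<longlonglongrightarrow> 0" using H by blast
    have L2: "(\<lambda>n. (\<Sum>i<n. (p n i)^2)) \<longlonglongrightarrow> 0"
    proof (rule tendsto_sandwich[OF _ _ tendsto_const L1])
      show "eventually (\<lambda>n. 0 \<le> (\<Sum>i<n. (p n i)^2)) sequentially"
        by (intro always_eventually allI sum_nonneg) auto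
      show "eventually (\<lambda>n. (\<Sum>i<n. (p n i)^2) \<le> real (m n) * (\<Sum>i<n. (p n i)^2)) sequentially"
        using evm
      proof eventually_elim
        case (elim n)
        have "0 \<le> (\<Sum>i<n. (p n i)^2)" by (intro sum_nonneg) auto
        then show ?case using elim by (simp add: mult_le_cancel_right1)
      qed
    qed
    have eqf: "(\<lambda>n. (?s2 - ?m1^2) * (1 + (real (m n) - 1) * (\<Sum>i<n. (p n i)^2) - real (m n) / real n))
      = (\<lambda>n. (?s2 - ?m1^2) * (1 + (real (m n) * (\<Sum>i<n. (p n i)^2) - (\<Sum>i<n. (p n i)^2)) - real (m n) / real n))"
      by (simp add: algebra_simps)
    have "(\<lambda>n. (?s2 - ?m1^2) * (1 + (real (m n) - 1) * (\<Sum>i<n. (p n i)^2) - real (m n) / real n))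
       \<longlonglongrightarrow> (?s2 - ?m1^2) * (1 + (0 - 0) - 0)"
      unfolding eqf by (intro tendsto_intros L1 L2 lim_mn)
    then have "(\<lambda>n. (?s2 - ?m1^2) * (1 + (real (m n) - 1) * (\<Sum>i<n. (p n i)^2) - real (m n) / real n))
       \<longlonglongrightarrow> ?s2 - ?m1^2" by simp
    then show "(\<lambda>n. MSE (M n) (\<lambda>w. sketch_err n (m n) (m n) (RS_matrix n (m n) (\<lambda>t. k n t w))
                          (\<lambda>i. fst (X n i w)) (\<lambda>i. snd (X n i w))))
       \<longlonglongrightarrow> ?s2 - ?m1^2"
      using tendsto_cong[OF ev] by simp
  next
    assume H: "\<forall>n. 1 \<le> n \<and> m n \<le> n \<longrightarrow> BS_sampling (M n) n (m n) (B n) (X n)"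
    have evle: "eventually (\<lambda>n. real (m n) / real n < 1) sequentially"
      using order_tendstoD(2)[OF lim_mn] by simp
    have ev: "eventually (\<lambda>n. MSE (M n) (\<lambda>w. sketch_err n (m n) n (BS_matrix n (m n) (\<lambda>i. B n i w))
                          (\<lambda>i. fst (X n i w)) (\<lambda>i. snd (X n i w)))
        = ?s2 * (1 - real (m n) / real n)) sequentially"
      using evm evn evle
    proof eventually_elim
      case (elim n)
      then have "m n \<le> n" by (simp add: divide_less_eq)
      then show ?case using BS_fixed[OF M mu iid U4 V4, of n "m n" "B n"] H elim by auto
    qed
    have "(\<lambda>n. ?s2 * (1 - real (m n) / real n)) \<longlonglongrightarrow> ?s2 * (1 - 0)"
      by (intro tendsto_intros lim_mn)
    then show "(\<lambda>n. MSE (M n) (\<lambda>w. sketch_err n (m n) n (BS_matrix n (m n) (\<lambda>i. B n i w))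
                          (\<lambda>i. fst (X n i w)) (\<lambda>i. snd (X n i w))))
       \<longlonglongrightarrow> ?s2"
      using tendsto_cong[OF ev] by simp
  qed
qed


end
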